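(* Let $0\le r\le n$. The operators $K_{rj}$, $j=0,1,\dots,r$, form a basis of the vector space $\mathcal L_{r,r}$; in particular $\dim\mathcal L_{r,r}=r+1$.
   Context: $D=d/dx$. For $s\ge0$, $\mathcal P_s$ is the space of real polynomials in $x$ of degree at most $s$, and $\mathcal P_s=\{0\}$ for $s<0$. For $0\le m\le r$, $\mathcal L_{r,m}$ denotes the real vector space of linear differential operators $L=\sum_{i=0}^r a_i(x)D^i$ with $a_i\in\mathbb R[x]$ (order at most $r$) such that $L(\mathcal P_n)\subset\mathcal P_{n-m}$ (deficiency at least $m$ relative to $\mathcal P_n$). Pochhammer operator: $(a-xD)_k=(-1)^k(xD-a)(xD-(a-1))\cdots(xD-(a-k+1))$. $K_{rj}=\frac{1}{(r-j)!}(n-j-xD)_{r-j}D^j$. *)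

theory Defs
  imports "HOL-Computational_Algebra.Polynomial" "HOL-Library.Function_Algebras"
begin

definition diffop :: "nat \<Rightarrow> (nat \<Rightarrow> real poly) \<Rightarrow> real poly \<Rightarrow> real poly" where
  "diffop r a p = (\<Sum>i\<le>r. a i * (pderiv ^^ i) p)"

text \<open>The space L_{r,m} (relative to P_n): operators of order at most r mapping
  P_n into P_{n-m}, where P_s = {0} for s < 0.\<close>

definition Lrm :: "nat \<Rightarrow> nat \<Rightarrow> nat \<Rightarrow> (real poly \<Rightarrow> real poly) set" where
  "Lrm n r m = {L. (\<exists>a. L = diffop r a) \<and>
      (\<forall>p. degree p \<le> n \<longrightarrow>
          (if m \<le> n then degree (L p) \<le> n - m else L p = 0))}"

definition op_scale :: "real \<Rightarrow> (real poly \<Rightarrow> real poly) \<Rightarrow> (real poly \<Rightarrow> real poly)" where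
  "op_scale c L = (\<lambda>p. smult c (L p))"

definition xD :: "real poly \<Rightarrow> real poly" where
  "xD p = [:0, 1:] * pderiv p"

text \<open>Pochhammer operator (a - xD)_k = prod_{i<k} ((a - i) - xD) (factors commute).\<close>

fun poch_op :: "real \<Rightarrow> nat \<Rightarrow> real poly \<Rightarrow> real poly" where
  "poch_op a 0 p = p"
| "poch_op a (Suc k) p = poch_op a k (smult (a - of_nat k) p - xD p)"

definition Kop :: "nat \<Rightarrow> nat \<Rightarrow> nat \<Rightarrow> real poly \<Rightarrow> real poly" where
  "Kop n r j p = smult (1 / fact (r - j))
      (poch_op (of_nat n - of_nat j) (r - j) ((pderiv ^^ j) p))"

lemma vector_space_op_scale: "vector_space op_scale"
  by unfold_locales (auto simp: op_scale_def fun_eq_iff smult_add_right smult_add_left)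

end

theory Submission imports Defs begin

definition Fk :: "nat \<Rightarrow> nat \<Rightarrow> real" where
  "Fk k i = (\<Prod>j<i. (real k - real j))"

definition ffp :: "nat \<Rightarrow> real poly" where
  "ffp i = (\<Prod>j<i. [:- real j, 1:])"

lemma poly_ffp: "poly (ffp i) (real k) = Fk k i"
  by (simp add: ffp_def Fk_def poly_prod)

lemma degree_ffp: "degree (ffp i) \<le> i"
proof -
  have "degree (ffp i) \<le> (\<Sum>j<i. degree [:- real j, 1:])"
    unfolding ffp_def using degree_prod_sum_le[of "{..<i}" "\<lambda>j. [:- real j, 1:]"] by (simp add: o_def)
  also have "\<dots> = i" by simp
  finally show ?thesis .
qed

lemma Fk_zero: "k < i \<Longrightarrow> Fk k i = 0"
  unfolding Fk_def by (rule prod_zero) auto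

lemma Fk_Suc: "Fk k (Suc i) = Fk k i * (real k - real i)"
  by (simp add: Fk_def)

lemma Fk_self: "Fk k k = fact k"
  unfolding Fk_def
proof (induction k)
  case 0 then show ?case by simp
next
  case (Suc k)
  have "(\<Prod>j<Suc k. real (Suc k) - real j) = (\<Prod>j\<in>Suc ` {..<k}. real (Suc k) - real j) * real (Suc k)"
    by (subst lessThan_Suc_eq_insert_0) (simp add: mult.commute)
  also have "(\<Prod>j\<in>Suc ` {..<k}. real (Suc k) - real j) = (\<Prod>j<k. real k - real j)"
    by (subst prod.reindex) auto
  finally show ?case using Suc by (simp add: mult.commute)
qed

lemma Fk_nz: "i \<le> k \<Longrightarrow> Fk k i \<noteq> 0"
  unfolding Fk_def by (subst prod_zero_iff) auto

lemma D_monom: "(pderiv ^^ i) (monom c k) = monom (c * Fk k i) (k - i)"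
proof (induction i)
  case 0 then show ?case by (simp add: Fk_def)
next
  case (Suc i)
  have "(pderiv ^^ Suc i) (monom c k) = monom (real (k - i) * (c * Fk k i)) (k - i - 1)"
    using Suc by (simp add: pderiv_monom)
  also have "real (k - i) * (c * Fk k i) = c * Fk k (Suc i)"
  proof (cases "i \<le> k")
    case True then show ?thesis by (simp add: Fk_Suc of_nat_diff)
  next
    case False then show ?thesis by (simp add: Fk_zero)
  qed
  finally show ?case by simp
qed

lemma smult_sum_right: "smult c (sum f A) = (\<Sum>x\<in>A. smult c (f x))"
  by (induction A rule: infinite_finite_induct) (simp_all add: smult_add_right)

lemma diffop_add: "diffop r a (p + q) = diffop r a p + diffop r a q"
  by (simp add: diffop_def higher_pderiv_add distrib_left sum.distrib)

lemma diffop_smult: "diffop r a (smult c p) = smult c (diffop r a p)"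
  by (simp add: diffop_def higher_pderiv_smult smult_sum_right)

lemma diffop_0: "diffop r a 0 = 0"
  by (simp add: diffop_def)

lemma diffop_sum: "diffop r a (sum f A) = (\<Sum>x\<in>A. diffop r a (f x))"
  by (induction A rule: infinite_finite_induct) (simp_all add: diffop_add diffop_0)

lemma diffop_monom: "diffop r a (monom 1 k) = (\<Sum>i\<le>r. a i * monom (Fk k i) (k - i))"
  by (simp add: diffop_def D_monom)

lemma coeff_diffop_monom:
  "coeff (diffop r a (monom 1 k)) t = (\<Sum>i\<le>r. if t < k - i then 0 else Fk k i * coeff (a i) (t - (k - i)))"
  by (simp add: diffop_monom coeff_sum mult.commute[of "a _"] coeff_monom_mult)

lemma ff_indep:
  assumes "(\<Sum>l\<le>r. smult (c l) (ffp l)) = 0" "i \<le> r"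
  shows "c i = 0"
  using assms(2)
proof (induction i rule: less_induct)
  case (less j)
  have "0 = poly (\<Sum>l\<le>r. smult (c l) (ffp l)) (real j)" using assms(1) by simp
  also have "\<dots> = (\<Sum>l\<le>r. c l * Fk j l)" by (simp add: poly_sum poly_ffp)
  also have "\<dots> = c j * Fk j j + (\<Sum>l\<in>{..r}-{j}. c l * Fk j l)"
    using less.prems by (subst sum.remove[of _ j]) auto
  finally have eq: "0 = c j * Fk j j + (\<Sum>l\<in>{..r}-{j}. c l * Fk j l)" .
  have "(\<Sum>l\<in>{..r}-{j}. c l * Fk j l) = 0"
  proof (rule sum.neutral)
    show "\<forall>l\<in>{..r}-{j}. c l * Fk j l = 0"
    proof
      fix l assume "l \<in> {..r}-{j}"
      then show "c l * Fk j l = 0"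
        using less.IH[of l] less.prems Fk_zero[of j l] by (cases "l < j") auto
    qed
  qed
  then show ?case using eq Fk_nz[of j j] by simp
qed

lemma roots_zero:
  fixes P :: "real poly"
  assumes "degree P \<le> r" "finite S" "r < card S" "\<And>k. k \<in> S \<Longrightarrow> poly P (real k) = 0"
  shows "P = 0"
proof (rule ccontr)
  assume P: "P \<noteq> 0"
  have "card (real ` S) \<le> card {x. poly P x = 0}"
    by (rule card_mono) (use P poly_roots_finite assms(4) in auto)
  moreover have "card {x. poly P x = 0} \<le> degree P" by (rule card_poly_roots_bound[OF P])
  moreover have "card (real ` S) = card S" by (simp add: card_image inj_on_def)
  ultimately show False using assms by simp
qed

lemma degree_ffsum: "degree (\<Sum>l\<le>r. smult (c l) (ffp l)) \<le> r"
  by (rule degree_sum_le) (auto intro: order.trans[OF degree_smult_le] order.trans[OF degree_ffp])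

lemma key:
  assumes rn: "r \<le> n"
    and M: "\<And>p. degree p \<le> n \<Longrightarrow> degree (diffop r a p) \<le> n - r"
    and c: "\<And>j. j \<le> r \<Longrightarrow> coeff (diffop r a (monom 1 j)) 0 = 0"
    and ir: "i \<le> r"
  shows "a i = 0"
proof (rule poly_eqI)
  fix t
  have vanish: "coeff (diffop r a (monom 1 k)) s = 0" if "k \<le> n" "n - r < s" for k s
  proof -
    have "degree (diffop r a (monom 1 k)) \<le> n - r" using M[of "monom 1 k"] that by (simp add: degree_monom_eq)
    then show ?thesis using that by (intro coeff_eq_0) simp
  qed
  show "coeff (a i) t = coeff 0 t"
  proof (cases "i < t")
    case True
    define m where "m = t - i"
    have m1: "1 \<le> m" using True m_def by simp
    define P where "P = (\<Sum>l\<le>r. smult (coeff (a l) (m + l)) (ffp l))"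
    have "P = 0"
    proof (rule roots_zero[of P r "{n-r..n}"])
      show "degree P \<le> r" unfolding P_def by (rule degree_ffsum)
      show "r < card {n-r..n}" using rn by simp
      fix k assume k: "k \<in> {n-r..n}"
      have "poly P (real k) = coeff (diffop r a (monom 1 k)) (k + m)"
        unfolding P_def coeff_diffop_monom poly_sum
      proof (rule sum.cong)
        fix l assume "l \<in> {..r}"
        show "poly (smult (coeff (a l) (m + l)) (ffp l)) (real k) =
          (if k + m < k - l then 0 else Fk k l * coeff (a l) (k + m - (k - l)))"
          by (cases "l \<le> k") (auto simp: poly_ffp Fk_zero)
      qed simp
      also have "\<dots> = 0" using k m1 by (intro vanish) auto
      finally show "poly P (real k) = 0" .
    qed simp
    then have "coeff (a i) (m + i) = 0" using ff_indep[of "\<lambda>l. coeff (a l) (m + l)" r i] ir P_def by simp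
    then show ?thesis using True m_def by simp
  next
    case False
    define e where "e = i - t"
    have er: "e \<le> r" using ir e_def by simp
    define P where "P = (\<Sum>l\<le>r. smult (if e \<le> l then coeff (a l) (l - e) else 0) (ffp l))"
    have Pk: "poly P (real k) = coeff (diffop r a (monom 1 k)) (k - e)" if "e \<le> k" for k
      unfolding P_def coeff_diffop_monom poly_sum
    proof (rule sum.cong)
      fix l assume "l \<in> {..r}"
      show "poly (smult (if e \<le> l then coeff (a l) (l - e) else 0) (ffp l)) (real k) =
          (if k - e < k - l then 0 else Fk k l * coeff (a l) (k - e - (k - l)))"
        using that by (cases "l \<le> k") (auto simp: poly_ffp Fk_zero)
    qed simp
    have "P = 0"
    proof (rule roots_zero[of P r "{0..e} \<union> {n-r+e+1..n}"])
      show "degree P \<le> r" unfolding P_def by (rule degree_ffsum)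
      have "card ({0..e} \<union> {n-r+e+1..n}) = card {0..e} + card {n-r+e+1..n}"
        by (rule card_Un_disjoint) auto
      then show "r < card ({0..e} \<union> {n-r+e+1..n})" using rn er by simp
      fix k assume k: "k \<in> {0..e} \<union> {n-r+e+1..n}"
      show "poly P (real k) = 0"
      proof (cases "k < e")
        case True
        show ?thesis unfolding P_def poly_sum
          by (rule sum.neutral) (use True in \<open>auto simp: poly_ffp Fk_zero\<close>)
      next
        case False
        then have "e \<le> k" by simp
        show ?thesis
        proof (cases "k = e")
          case True then show ?thesis using Pk[of k] c[OF er] by simp
        next
          case False
          then have "k \<in> {n-r+e+1..n}" using k \<open>e \<le> k\<close> by auto
          then have "coeff (diffop r a (monom 1 k)) (k - e) = 0" by (intro vanish) auto
          then show ?thesis using Pk[of k] \<open>e \<le> k\<close> by simp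
        qed
      qed
    qed simp
    then have "(if e \<le> i then coeff (a i) (i - e) else 0) = 0"
      using ff_indep[of "\<lambda>l. if e \<le> l then coeff (a l) (l - e) else 0" r i] ir P_def by simp
    then show ?thesis using False e_def by simp
  qed
qed

lemma x_monom1: "[:0,1:] = monom (1::real) 1"
  by (rule poly_eqI) (simp add: coeff_pCons coeff_monom split: nat.split)

lemma xD_monom: "xD (monom c s) = monom (c * real s) s"
  by (cases s) (simp_all add: xD_def pderiv_monom x_monom1 mult_monom mult.commute)

lemma xD_diff: "xD (p - q) = xD p - xD q"
  by (simp add: xD_def pderiv_diff algebra_simps)

lemma xD_smult: "xD (smult c p) = smult c (xD p)"
  by (simp add: xD_def pderiv_smult)

lemma poch_diff: "poch_op a k (p - q) = poch_op a k p - poch_op a k q"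
proof (induction k arbitrary: p q)
  case (Suc k)
  have "smult (a - real k) (p - q) - xD (p - q) = (smult (a - real k) p - xD p) - (smult (a - real k) q - xD q)"
    by (simp add: xD_diff smult_diff_right algebra_simps)
  then show ?case by (simp only: poch_op.simps Suc.IH)
qed simp

lemma poch_smult: "poch_op a k (smult c p) = smult c (poch_op a k p)"
proof (induction k arbitrary: p)
  case (Suc k)
  have "smult (a - real k) (smult c p) - xD (smult c p) = smult c (smult (a - real k) p - xD p)"
    by (simp add: xD_smult smult_diff_right algebra_simps)
  then show ?case by (simp only: poch_op.simps Suc.IH)
qed simp

lemma poch_xD: "poch_op a k (xD p) = xD (poch_op a k p)"
proof (induction k arbitrary: p)
  case (Suc k)
  have "smult (a - real k) (xD p) - xD (xD p) = xD (smult (a - real k) p - xD p)"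
    by (simp add: xD_smult xD_diff)
  then show ?case by (simp only: poch_op.simps Suc.IH)
qed simp

lemma poch_outer: "poch_op a (Suc k) p = smult (a - real k) (poch_op a k p) - xD (poch_op a k p)"
  by (simp add: poch_diff poch_smult poch_xD)

lemma poch_monom: "poch_op a k (monom c s) = monom (c * (\<Prod>l<k. a - real l - real s)) s"
proof (induction k arbitrary: c)
  case 0 then show ?case by simp
next
  case (Suc k)
  have "smult (a - real k) (monom c s) - xD (monom c s) = monom (c * (a - real k - real s)) s"
    by (rule poly_eqI) (simp add: xD_monom coeff_monom algebra_simps)
  then show ?case using Suc by (simp add: algebra_simps)
qed

lemma Kop_monom: "Kop n r j (monom 1 k) =
  monom (1 / fact (r - j) * (Fk k j * (\<Prod>l<r-j. real n - real j - real l - real (k - j)))) (k - j)"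
  by (simp add: Kop_def D_monom poch_monom smult_monom)

lemma pderiv_sum': "pderiv (sum f A) = (\<Sum>x\<in>A. pderiv (f x))"
  by (induction A rule: infinite_finite_induct) (simp_all add: pderiv_add)

lemma diffop_step: "\<exists>b'. (\<lambda>p. smult c (diffop s b p) - xD (diffop s b p)) = diffop (Suc s) b'"
proof -
  define b' where "b' i = smult c (if i \<le> s then b i else 0) -
     [:0,1:] * ((if i \<le> s then pderiv (b i) else 0) + (if i = 0 then 0 else b (i - 1)))" for i
  have "diffop (Suc s) b' p = smult c (diffop s b p) - xD (diffop s b p)" for p
  proof -
    have s1: "(\<Sum>i\<le>Suc s. (if i \<le> s then f i else 0)) = (\<Sum>i\<le>s. f i)" for f :: "nat \<Rightarrow> real poly"
      by (simp add: sum.atMost_Suc)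
    have s2: "(\<Sum>i\<le>Suc s. (if i = 0 then 0 else b (i - 1)) * (pderiv ^^ i) p) =
        (\<Sum>i\<le>s. b i * (pderiv ^^ Suc i) p)"
      by (subst sum.atMost_Suc_shift) simp
    have "diffop (Suc s) b' p = (\<Sum>i\<le>Suc s. (if i \<le> s then smult c (b i * (pderiv ^^ i) p) else 0))
       - [:0,1:] * ((\<Sum>i\<le>Suc s. (if i \<le> s then pderiv (b i) * (pderiv ^^ i) p else 0))
       + (\<Sum>i\<le>Suc s. (if i = 0 then 0 else b (i - 1)) * (pderiv ^^ i) p))"
    proof -
      have t: "b' i * (pderiv ^^ i) p = (if i \<le> s then smult c (b i * (pderiv ^^ i) p) else 0)
       - [:0,1:] * ((if i \<le> s then pderiv (b i) * (pderiv ^^ i) p else 0)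
       + (if i = 0 then 0 else b (i - 1)) * (pderiv ^^ i) p)" for i
        by (simp add: b'_def algebra_simps)
      show ?thesis unfolding diffop_def t
        by (simp only: sum_subtractf sum_distrib_left sum.distrib distrib_left)
    qed
    also have "\<dots> = smult c (diffop s b p) - [:0,1:] * ((\<Sum>i\<le>s. pderiv (b i) * (pderiv ^^ i) p)
       + (\<Sum>i\<le>s. b i * (pderiv ^^ Suc i) p))"
      unfolding s1 s2 by (simp add: diffop_def smult_sum_right)
    also have "\<dots> = smult c (diffop s b p) - xD (diffop s b p)"
      by (simp add: xD_def diffop_def pderiv_sum' pderiv_mult sum.distrib algebra_simps)
    finally show ?thesis .
  qed
  then have "(\<lambda>p. smult c (diffop s b p) - xD (diffop s b p)) = diffop (Suc s) b'" by (simp add: fun_eq_iff)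
  then show ?thesis by blast
qed

lemma diffop_smult_op: "(\<lambda>p. smult c (diffop s b p)) = diffop s (\<lambda>i. smult c (b i))"
  by (simp add: fun_eq_iff diffop_def smult_sum_right)

lemma Dj_diffop: "(pderiv ^^ j) = diffop j (\<lambda>i. if i = j then 1 else 0)"
proof -
  have "\<And>x i. (if i = j then 1 else 0) * x = (if i = j then x else (0::real poly))" by simp
  then show ?thesis by (simp add: fun_eq_iff diffop_def)
qed

lemma poch_D_diffop: "\<exists>b. (\<lambda>p. poch_op a k ((pderiv ^^ j) p)) = diffop (k + j) b"
proof (induction k)
  case 0 then show ?case using Dj_diffop by auto
next
  case (Suc k)
  then obtain b where b: "(\<lambda>p. poch_op a k ((pderiv ^^ j) p)) = diffop (k + j) b" by blast
  obtain b' where "(\<lambda>p. smult (a - real k) (diffop (k + j) b p) - xD (diffop (k + j) b p)) = diffop (Suc (k + j)) b'"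
    using diffop_step by blast
  then have "(\<lambda>p. poch_op a (Suc k) ((pderiv ^^ j) p)) = diffop (Suc k + j) b'"
    unfolding poch_outer using b by (simp add: fun_eq_iff)
  then show ?case by blast
qed

lemma Kop_diffop: "j \<le> r \<Longrightarrow> \<exists>b. Kop n r j = diffop r b"
proof -
  assume "j \<le> r"
  obtain b where b: "(\<lambda>p. poch_op (real n - real j) (r - j) ((pderiv ^^ j) p)) = diffop (r - j + j) b"
    using poch_D_diffop by blast
  have "Kop n r j = (\<lambda>p. smult (1 / fact (r - j)) (diffop r b p))"
    using b \<open>j \<le> r\<close> by (simp add: fun_eq_iff Kop_def)
  then show ?thesis using diffop_smult_op by metis
qed

lemma lin_deg:
  assumes "\<And>k. k \<le> n \<Longrightarrow> degree (diffop r b (monom 1 k)) \<le> d" "degree p \<le> n"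
  shows "degree (diffop r b p) \<le> d"
proof -
  have "p = (\<Sum>k\<le>degree p. smult (coeff p k) (monom 1 k))"
    by (simp add: smult_monom poly_as_sum_of_monoms)
  then have "diffop r b p = (\<Sum>k\<le>degree p. smult (coeff p k) (diffop r b (monom 1 k)))"
    by (metis (no_types, lifting) diffop_smult diffop_sum sum.cong)
  also have "degree \<dots> \<le> d"
    by (rule degree_sum_le) (use assms in \<open>auto intro: order.trans[OF degree_smult_le]\<close>)
  finally show ?thesis .
qed

lemma Kop_deg:
  assumes "r \<le> n" "j \<le> r" "k \<le> n"
  shows "degree (Kop n r j (monom 1 k)) \<le> n - r"
proof (cases "k - j \<le> n - r")
  case True
  then show ?thesis unfolding Kop_monom by (rule order.trans[OF degree_monom_le])
next
  case False
  then have kj: "j \<le> k" "n - k < r - j" using assms by auto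
  have "(\<Prod>l<r-j. real n - real j - real l - real (k - j)) = 0"
    by (rule prod_zero) (use kj assms in \<open>auto intro!: bexI[of _ "n - k"] simp: of_nat_diff\<close>)
  then show ?thesis unfolding Kop_monom by (simp only: mult_zero_right) simp
qed

definition Cc :: "nat \<Rightarrow> nat \<Rightarrow> nat \<Rightarrow> real" where
  "Cc n r j = 1 / fact (r - j) * (Fk j j * (\<Prod>l<r-j. real n - real j - real l - real (j - j)))"

lemma Cc_nz: "r \<le> n \<Longrightarrow> j \<le> r \<Longrightarrow> Cc n r j \<noteq> 0"
  unfolding Cc_def using Fk_nz[of j j] by (auto simp: prod_zero_iff)

lemma Kop_c:
  assumes "j' \<le> r"
  shows "coeff (Kop n r j' (monom 1 j)) 0 = (if j = j' then Cc n r j else 0)"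
proof (cases "j < j'")
  case True then show ?thesis unfolding Kop_monom by (simp add: Fk_zero)
next
  case False
  show ?thesis
  proof (cases "j = j'")
    case True
    then show ?thesis by (simp only: Kop_monom Cc_def diff_self_eq_0 coeff_monom if_True refl)
  next
    case False
    then show ?thesis using \<open>\<not> j < j'\<close> unfolding Kop_monom by (auto simp: coeff_monom)
  qed
qed

lemma fun_sum_apply: "(\<Sum>v\<in>A. f v) p = (\<Sum>v\<in>A. f v p)"
  by (induction A rule: infinite_finite_induct) simp_all

lemma coeff_lincomb:
  assumes "j \<le> r"
  shows "coeff ((\<Sum>j'\<le>r. op_scale (u j') (Kop n r j')) (monom 1 j)) 0 = u j * Cc n r j"
proof -
  have "coeff ((\<Sum>j'\<le>r. op_scale (u j') (Kop n r j')) (monom 1 j)) 0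
      = (\<Sum>j'\<le>r. u j' * (if j = j' then Cc n r j else 0))"
    by (simp add: fun_sum_apply op_scale_def coeff_sum Kop_c)
  also have "\<dots> = u j * Cc n r j" using assms by (simp add: if_distrib cong: if_cong)
  finally show ?thesis .
qed

lemma Lrm_subspace: "module.subspace op_scale (Lrm n r m)"
proof -
  interpret V: vector_space op_scale by (rule vector_space_op_scale)
  show ?thesis
  proof (rule V.subspaceI)
    have "(0 :: real poly \<Rightarrow> real poly) = diffop r (\<lambda>_. 0)" by (simp add: fun_eq_iff diffop_def)
    then show "0 \<in> Lrm n r m" unfolding Lrm_def by auto
  next
    fix x y assume x: "x \<in> Lrm n r m" and y: "y \<in> Lrm n r m"
    then obtain a b where ab: "x = diffop r a" "y = diffop r b" unfolding Lrm_def by blast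
    have "x + y = diffop r (\<lambda>i. a i + b i)"
      by (simp add: ab fun_eq_iff diffop_def distrib_right sum.distrib)
    moreover have "(if m \<le> n then degree ((x + y) p) \<le> n - m else (x + y) p = 0)" if "degree p \<le> n" for p
      using x y that unfolding Lrm_def by (auto intro!: degree_add_le)
    ultimately show "x + y \<in> Lrm n r m" unfolding Lrm_def by blast
  next
    fix c x assume x: "x \<in> Lrm n r m"
    then obtain a where a: "x = diffop r a" unfolding Lrm_def by blast
    have "op_scale c x = diffop r (\<lambda>i. smult c (a i))"
      unfolding a op_scale_def by (rule diffop_smult_op)
    moreover have "(if m \<le> n then degree (op_scale c x p) \<le> n - m else op_scale c x p = 0)" if "degree p \<le> n" for p
      using x that unfolding Lrm_def op_scale_def by (auto intro: order.trans[OF degree_smult_le])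
    ultimately show "op_scale c x \<in> Lrm n r m" unfolding Lrm_def by blast
  qed
qed

theorem mainTheorem17:
  fixes n r :: nat
  assumes "r \<le> n"
  shows "(\<forall>j\<le>r. Kop n r j \<in> Lrm n r r)
    \<and> inj_on (Kop n r) {..r}
    \<and> module.independent op_scale (Kop n r ` {..r})
    \<and> module.span op_scale (Kop n r ` {..r}) = Lrm n r r
    \<and> vector_space.dim op_scale (Lrm n r r) = r + 1"
proof -
  interpret V: vector_space op_scale by (rule vector_space_op_scale)
  have sub: "V.subspace (Lrm n r r)" by (rule Lrm_subspace)
  have Kin: "\<forall>j\<le>r. Kop n r j \<in> Lrm n r r"
  proof (intro allI impI)
    fix j assume j: "j \<le> r"
    obtain b where b: "Kop n r j = diffop r b" using Kop_diffop[OF j] by blast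
    have "degree (Kop n r j p) \<le> n - r" if "degree p \<le> n" for p
      unfolding b by (rule lin_deg[OF _ that]) (use Kop_deg[OF assms j] b in simp)
    then show "Kop n r j \<in> Lrm n r r" unfolding Lrm_def using b assms by auto
  qed
  have inj: "inj_on (Kop n r) {..r}"
  proof (rule inj_onI)
    fix j j' assume j: "j \<in> {..r}" and j': "j' \<in> {..r}" and eq: "Kop n r j = Kop n r j'"
    have "coeff (Kop n r j (monom 1 j)) 0 = coeff (Kop n r j' (monom 1 j)) 0" using eq by simp
    then show "j = j'" using Kop_c[of j r n j] Kop_c[of j' r n j] Cc_nz[OF assms, of j] j j'
      by (auto split: if_splits)
  qed
  have indep: "V.independent (Kop n r ` {..r})"
  proof (rule V.independent_if_scalars_zero)
    show "finite (Kop n r ` {..r})" by simp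
  next
    fix f x assume s: "(\<Sum>x\<in>Kop n r ` {..r}. op_scale (f x) x) = 0" and x: "x \<in> Kop n r ` {..r}"
    then obtain j where j: "j \<le> r" "x = Kop n r j" by auto
    have "(\<Sum>j'\<le>r. op_scale (f (Kop n r j')) (Kop n r j')) = 0"
      using s by (simp add: sum.reindex[OF inj])
    then have "coeff ((\<Sum>j'\<le>r. op_scale (f (Kop n r j')) (Kop n r j')) (monom 1 j)) 0 = 0" by simp
    then have "f (Kop n r j) * Cc n r j = 0" using coeff_lincomb[OF j(1)] by simp
    then show "f x = 0" using Cc_nz[OF assms j(1)] j by simp
  qed
  have span1: "V.span (Kop n r ` {..r}) \<subseteq> Lrm n r r"
    by (rule V.span_minimal) (use Kin sub in auto)
  have span2: "Lrm n r r \<subseteq> V.span (Kop n r ` {..r})"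
  proof
    fix M assume M: "M \<in> Lrm n r r"
    define u where "u j = coeff (M (monom 1 j)) 0 / Cc n r j" for j
    define S where "S = (\<Sum>j'\<le>r. op_scale (u j') (Kop n r j'))"
    have Ssp: "S \<in> V.span (Kop n r ` {..r})" unfolding S_def
      by (intro V.span_sum V.span_scale V.span_base) auto
    have mem: "M - S \<in> Lrm n r r" using V.subspace_diff[OF sub M] Ssp span1 by auto
    then obtain a where a: "M - S = diffop r a" unfolding Lrm_def by blast
    have deg: "degree (diffop r a p) \<le> n - r" if "degree p \<le> n" for p
      using mem that assms unfolding Lrm_def a by auto
    have c: "coeff (diffop r a (monom 1 j)) 0 = 0" if j: "j \<le> r" for j
    proof -
      have "coeff (diffop r a (monom 1 j)) 0 = coeff (M (monom 1 j)) 0 - coeff (S (monom 1 j)) 0"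
        by (simp flip: a)
      also have "coeff (S (monom 1 j)) 0 = u j * Cc n r j" unfolding S_def by (rule coeff_lincomb[OF j])
      finally show ?thesis using Cc_nz[OF assms j] by (simp add: u_def)
    qed
    have "\<And>i. i \<le> r \<Longrightarrow> a i = 0"
      by (rule key[OF assms _ c]) (use deg a in auto)
    then have "M - S = 0" unfolding a by (simp add: fun_eq_iff diffop_def)
    then show "M \<in> V.span (Kop n r ` {..r})" using Ssp by simp
  qed
  have dim: "V.dim (Lrm n r r) = r + 1"
    by (rule V.dim_unique[of "Kop n r ` {..r}"]) (use Kin span2 indep inj in \<open>auto simp: card_image\<close>)
  show ?thesis using Kin inj indep span1 span2 dim by blast
qed

end
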